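(* Fix $g\ge0$ and $n\ge0$. There is a bijection from the set of ordered rooted trees $T$ with $n+1$ vertices satisfying $\max_{0\le i<n}\operatorname{dist}_T(i,i+1)\le g+1$ to the set of quadruples $(m,L,R,M)$ such that - $m$ is a non-negative integer, - $L=(L_1,\dots,L_m)$ is an $m$-tuple of ordered rooted trees of depth at most $\lfloor g/2\rfloor$, - $R=(R_1,\dots,R_m)$ is an $m$-tuple of ordered rooted trees of depth at most $\lceil g/2\rceil$, - $M$ is an ordered rooted tree of depth at most $\lceil g/2\rceil$ if $m=0$, and of depth exactly $\lceil g/2\rceil$ otherwise, and the total number of vertices of the trees in $L$, $R$ and $M$ is $n+1+m$.
   Context: An ordered rooted tree is an unlabeled rooted tree (with at least one vertex) together with a linear order on the children of each vertex. A rooted tree with vertex set $\{0,\dots,n\}$ is naturally labeled if labels increase towards the root and, for each $i$, all children of $i$ have labels smaller than all children of $i+1$. Each ordered rooted tree with $n+1$ vertices has a unique naturally labeled labeling by $\{0,\dots,n\}$ for which the children of each vertex are ordered by increasing label; vertices of $T$ are identified with these labels, and $\operatorname{dist}_T(i,j)$ is the number of edges on the path between $i$ and $j$. The depth of a rooted tree is the maximal number of edges on a path from the root to a vertex. *)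

theory Defs
  imports Main
begin

datatype otree = Node "otree list"

fun kids :: "otree \<Rightarrow> otree list" where
  "kids (Node ts) = ts"

fun nverts :: "otree \<Rightarrow> nat" where
  "nverts (Node ts) = Suc (sum_list (map nverts ts))"

fun depth :: "otree \<Rightarrow> nat" where
  "depth (Node ts) = Max (insert 0 (set (map (\<lambda>t. Suc (depth t)) ts)))"

text \<open>Vertices are addressed by paths from the root (lists of child indices).\<close>
fun subtree :: "otree \<Rightarrow> nat list \<Rightarrow> otree" where
  "subtree t [] = t"
| "subtree (Node ts) (i # p) = subtree (ts ! i) p"

text \<open>Vertices at a given level, in the order in which the natural labeling
  assigns decreasing labels: a breadth-first order in which the children of
  each vertex are listed from last to first.\<close>
fun level :: "otree \<Rightarrow> nat \<Rightarrow> nat list list" where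
  "level t 0 = [[]]"
| "level t (Suc d) = concat (map (\<lambda>p. map (\<lambda>i. p @ [i])
       (rev [0..<length (kids (subtree t p))])) (level t d))"

definition bfs :: "otree \<Rightarrow> nat list list" where
  "bfs t = concat (map (level t) [0..<Suc (depth t)])"

text \<open>The vertex with label i in the natural labeling by {0,...,n}
  (n+1 = number of vertices; the root gets label n).\<close>
definition vertex :: "otree \<Rightarrow> nat \<Rightarrow> nat list" where
  "vertex t i = bfs t ! (nverts t - 1 - i)"

fun lcp_len :: "nat list \<Rightarrow> nat list \<Rightarrow> nat" where
  "lcp_len (a # p) (b # q) = (if a = b then Suc (lcp_len p q) else 0)"
| "lcp_len _ _ = 0"

definition path_dist :: "nat list \<Rightarrow> nat list \<Rightarrow> nat" where
  "path_dist p q = length p + length q - 2 * lcp_len p q"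

definition tdist :: "otree \<Rightarrow> nat \<Rightarrow> nat \<Rightarrow> nat" where
  "tdist t i j = path_dist (vertex t i) (vertex t j)"

end

theory Submission
  imports Defs
begin


lemma depth_Node_le: "depth (Node ks) \<le> k \<longleftrightarrow> (\<forall>t\<in>set ks. Suc (depth t) \<le> k)"
  by auto

lemma depth_Node_lt: "depth (Node ks) < Suc d \<longleftrightarrow> (\<forall>i<length ks. depth (ks!i) < d)"
proof -
  have "depth (Node ks) < Suc d \<longleftrightarrow> (\<forall>t\<in>set ks. Suc (depth t) \<le> d)"
    using depth_Node_le[of ks d] by linarith
  also have "\<dots> \<longleftrightarrow> (\<forall>i<length ks. depth (ks!i) < d)"
    by (metis Suc_le_eq in_set_conv_nth)
  finally show ?thesis .
qed

lemma depth_child: "t \<in> set ks \<Longrightarrow> Suc (depth t) \<le> depth (Node ks)"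
  using depth_Node_le by blast

lemma depth_Node_ex: "ks \<noteq> [] \<Longrightarrow> \<exists>t\<in>set ks. depth (Node ks) = Suc (depth t)"
proof -
  assume "ks \<noteq> []"
  have "Max (insert 0 (set (map (\<lambda>t. Suc (depth t)) ks))) \<in> insert 0 (set (map (\<lambda>t. Suc (depth t)) ks))"
    by (intro Max_in) auto
  moreover have "Max (insert 0 (set (map (\<lambda>t. Suc (depth t)) ks))) \<noteq> 0"
  proof -
    obtain t where "t \<in> set ks" using \<open>ks \<noteq> []\<close> by (cases ks) auto
    then have "Suc (depth t) \<le> Max (insert 0 (set (map (\<lambda>t. Suc (depth t)) ks)))"
      by (intro Max_ge) auto
    then show ?thesis by linarith
  qed
  ultimately show ?thesis by auto
qed

lemma concat_map_concat': "concat (map f (concat xss)) = concat (map (\<lambda>xs. concat (map f xs)) xss)"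
  by (induct xss) auto

lemma concat_concat': "concat (concat xss) = concat (map concat xss)"
  by (induct xss) auto

lemma level_Node: "level (Node ks) (Suc d) = concat (map (\<lambda>i. map (Cons i) (level (ks!i) d)) (rev [0..<length ks]))"
proof (induction d)
  case 0
  then show ?case by (simp add: map_concat comp_def)
next
  case (Suc d)
  show ?case
    apply (subst level.simps(2))
    apply (subst Suc)
    apply (simp add: map_concat comp_def concat_map_concat' concat_concat')
    done
qed


declare level.simps(2)[simp del]

lemma set_level_Node: "p \<in> set (level (Node ks) (Suc d)) \<longleftrightarrow>
   (\<exists>i p'. p = i # p' \<and> i < length ks \<and> p' \<in> set (level (ks!i) d))"
  by (auto simp: level_Node)

lemma level_length: "p \<in> set (level t d) \<Longrightarrow> length p = d"
  by (induction d arbitrary: p) (auto simp: level.simps(2))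

lemma level_empty: "level t d = [] \<longleftrightarrow> depth t < d"
proof (induction t arbitrary: d)
  case (Node ks)
  show ?case
  proof (cases d)
    case 0
    then show ?thesis by simp
  next
    case (Suc d')
    have "level (Node ks) (Suc d') = [] \<longleftrightarrow> (\<forall>i<length ks. level (ks!i) d' = [])"
      by (auto simp: level_Node)
    also have "\<dots> \<longleftrightarrow> (\<forall>i<length ks. depth (ks!i) < d')"
      using Node by (auto simp: nth_mem)
    also have "\<dots> \<longleftrightarrow> depth (Node ks) < Suc d'"
      by (rule depth_Node_lt[symmetric])
    finally show ?thesis using Suc by simp
  qed
qed

lemma length_level_Node: "length (level (Node ks) (Suc d)) = (\<Sum>i<length ks. length (level (ks!i) d))"
proof -
  have "length (level (Node ks) (Suc d)) = sum_list (map (\<lambda>i. length (level (ks!i) d)) (rev [0..<length ks]))"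
    by (simp add: level_Node length_concat comp_def)
  also have "\<dots> = sum_list (map (\<lambda>i. length (level (ks!i) d)) [0..<length ks])"
    by (simp add: sum_list_rev rev_map[symmetric] del: rev_map)
  also have "\<dots> = (\<Sum>i<length ks. length (level (ks!i) d))"
    by (simp add: sum_list_distinct_conv_sum_set atLeast0LessThan)
  finally show ?thesis .
qed

lemma sum_levels: "depth t < D \<Longrightarrow> (\<Sum>d<D. length (level t d)) = nverts t"
proof (induction t arbitrary: D)
  case (Node ks)
  obtain D' where D: "D = Suc D'" using Node.prems by (cases D) auto
  have "(\<Sum>d<D. length (level (Node ks) d)) = 1 + (\<Sum>d<D'. length (level (Node ks) (Suc d)))"
    unfolding D sum.lessThan_Suc_shift by simp
  also have "\<dots> = 1 + (\<Sum>d<D'. \<Sum>i<length ks. length (level (ks!i) d))"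
    by (simp add: length_level_Node)
  also have "\<dots> = 1 + (\<Sum>i<length ks. \<Sum>d<D'. length (level (ks!i) d))"
    by (subst sum.swap) (rule refl)
  also have "\<dots> = 1 + (\<Sum>i<length ks. nverts (ks!i))"
  proof -
    have "(\<Sum>d<D'. length (level (ks!i) d)) = nverts (ks!i)" if "i < length ks" for i
    proof (rule Node.IH)
      show "ks!i \<in> set ks" using that by simp
      have "Suc (depth (ks!i)) \<le> depth (Node ks)" using that by (intro depth_child) simp
      then show "depth (ks!i) < D'" using Node.prems D by linarith
    qed
    then show ?thesis by simp
  qed
  also have "\<dots> = nverts (Node ks)"
    by (simp add: sum_list_sum_nth atLeast0LessThan)
  finally show ?case .
qed

lemma length_bfs: "length (bfs t) = nverts t"
proof -
  have "length (bfs t) = sum_list (map (\<lambda>d. length (level t d)) [0..<Suc (depth t)])"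
    by (simp add: bfs_def length_concat comp_def)
  also have "\<dots> = (\<Sum>d<Suc (depth t). length (level t d))"
    by (simp add: sum_list_distinct_conv_sum_set atLeast0LessThan)
  also have "\<dots> = nverts t" by (rule sum_levels) simp
  finally show ?thesis .
qed





fun adj :: "('a \<Rightarrow> 'a \<Rightarrow> bool) \<Rightarrow> 'a list \<Rightarrow> bool" where
  "adj P (x # y # zs) = (P x y \<and> adj P (y # zs))"
| "adj P _ = True"

lemma adj_nth: "adj P xs \<longleftrightarrow> (\<forall>k. Suc k < length xs \<longrightarrow> P (xs!k) (xs!Suc k))"
proof (induction P xs rule: adj.induct)
  case (1 P x y zs)
  show ?case
    apply (simp add: 1)
    apply (auto simp: All_less_Suc2)
    done
qed auto

lemma adj_append: "adj P (xs @ ys) \<longleftrightarrow> adj P xs \<and> adj P ys \<and> (xs \<noteq> [] \<and> ys \<noteq> [] \<longrightarrow> P (last xs) (hd ys))"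
proof (induction xs)
  case Nil
  then show ?case by simp
next
  case (Cons x xs)
  then show ?case by (cases xs; cases ys) auto
qed

lemma adj_concat: "\<forall>xs\<in>set xss. xs \<noteq> [] \<Longrightarrow>
  adj P (concat xss) \<longleftrightarrow> (\<forall>xs\<in>set xss. adj P xs) \<and> adj (\<lambda>xs ys. P (last xs) (hd ys)) xss"
proof (induction xss)
  case Nil
  then show ?case by simp
next
  case (Cons xs xss)
  then show ?case by (cases xss) (auto simp: adj_append)
qed

lemma adj_all:
  assumes tr: "\<And>x y z. x \<in> S \<Longrightarrow> y \<in> S \<Longrightarrow> z \<in> S \<Longrightarrow> R x y \<Longrightarrow> R y z \<Longrightarrow> R x z"
    and rf: "\<And>x. x \<in> S \<Longrightarrow> R x x"
    and sy: "\<And>x y. x \<in> S \<Longrightarrow> y \<in> S \<Longrightarrow> R x y \<Longrightarrow> R y x"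
  shows "set xs \<subseteq> S \<Longrightarrow> adj R xs \<Longrightarrow> \<forall>u\<in>set xs. \<forall>v\<in>set xs. R u v"
proof (induction xs rule: induct_list012)
  case 1
  then show ?case by simp
next
  case (2 x)
  then show ?case using rf by simp
next
  case (3 x y zs)
  have S: "x \<in> S" "set (y#zs) \<subseteq> S" using "3.prems"(1) by auto
  have xy: "R x y" and a2: "adj R (y#zs)" using "3.prems"(2) by auto
  have IH: "\<forall>u\<in>set (y#zs). \<forall>v\<in>set (y#zs). R u v" using "3.IH"(2) S(2) a2 by blast
  have xv: "R x v" if "v \<in> set (y#zs)" for v
  proof -
    have "R y v" using IH that by (meson list.set_intros(1))
    moreover have "y \<in> S" "v \<in> S" using S that by auto
    ultimately show ?thesis using tr[of x y v] xy S(1) by blast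
  qed
  have vx: "R v x" if "v \<in> set (y#zs)" for v
    using sy[of x v] xv[OF that] S that by blast
  show ?case
  proof (intro ballI)
    fix u v assume u: "u \<in> set (x#y#zs)" and v: "v \<in> set (x#y#zs)"
    show "R u v"
    proof (cases "u = x")
      case True
      then show ?thesis using v xv rf S(1) by (metis set_ConsD)
    next
      case False
      then have u': "u \<in> set (y#zs)" using u by simp
      show ?thesis
      proof (cases "v = x")
        case True then show ?thesis using vx u' by simp
      next
        case False
        then have v': "v \<in> set (y#zs)" using v by simp
        show ?thesis using IH u' v' by blast
      qed
    qed
  qed
qed

lemma all_adj: "\<forall>x\<in>set xs. \<forall>y\<in>set xs. R x y \<Longrightarrow> adj R xs"
  by (induction R xs rule: adj.induct) auto

lemma adj_map_upt: "adj Q (map f [0..<Suc D]) \<longleftrightarrow> (\<forall>d<D. Q (f d) (f (Suc d)))"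
  by (auto simp: adj_nth nth_append simp del: upt_Suc)

lemma lcp_sym: "lcp_len p q = lcp_len q p"
  by (induction p q rule: lcp_len.induct) auto

lemma lcp_le: "lcp_len p q \<le> length p" "lcp_len p q \<le> length q"
  by (induction p q rule: lcp_len.induct) auto

lemma lcp_self: "lcp_len p p = length p"
  by (induction p) auto

lemma lcp_trans: "min (lcp_len p q) (lcp_len q r) \<le> lcp_len p r"
proof (induction p q arbitrary: r rule: lcp_len.induct)
  case (1 a p b q)
  show ?case
  proof (cases r)
    case Nil
    then show ?thesis by simp
  next
    case (Cons c r')
    show ?thesis
    proof (cases "a = b \<and> b = c")
      case True
      then have "min (lcp_len p q) (lcp_len q r') \<le> lcp_len p r'" using "1.IH" by blast
      then show ?thesis using True Cons by simp
    next
      case False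
      then show ?thesis using Cons by auto
    qed
  qed
qed auto

lemma path_dist_sym: "path_dist p q = path_dist q p"
  by (simp add: path_dist_def lcp_sym)

lemma path_dist_same:
  assumes "length p = d" "length q = d"
  shows "path_dist p q \<le> g + 1 \<longleftrightarrow> d \<le> lcp_len p q + (g + 1) div 2"
proof -
  have "lcp_len p q \<le> d" using lcp_le[of p q] assms by simp
  moreover have "path_dist p q = 2 * d - 2 * lcp_len p q" using assms by (simp add: path_dist_def)
  ultimately show ?thesis by (simp only:) presburger
qed

lemma path_dist_next:
  assumes "length p = d" "length q = Suc d"
  shows "path_dist p q \<le> g + 1 \<longleftrightarrow> d \<le> lcp_len p q + g div 2"
proof -
  have "lcp_len p q \<le> d" using lcp_le[of p q] assms by simp
  moreover have "path_dist p q = 2 * d + 1 - 2 * lcp_len p q" using assms by (simp add: path_dist_def)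
  ultimately show ?thesis by (simp only:) presburger
qed




lemma upt_split3: "j < n \<Longrightarrow> rev [0..<n] = rev [Suc j..<n] @ j # rev [0..<j]"
proof -
  assume "j < n"
  then have "[0..<n] = [0..<j] @ [j..<n]" using upt_add_eq_append[of 0 j "n - j"] by simp
  also have "[j..<n] = j # [Suc j..<n]" using \<open>j < n\<close> by (simp add: upt_conv_Cons)
  finally show ?thesis by simp
qed

lemma concat_map_empty: "\<forall>i\<in>set xs. f i = [] \<Longrightarrow> concat (map f xs) = []"
  by (induct xs) auto

lemma hd_level:
  assumes "j < length ks" "level (ks!j) d \<noteq> []" "\<forall>i. j < i \<and> i < length ks \<longrightarrow> level (ks!i) d = []"
  shows "hd (level (Node ks) (Suc d)) = j # hd (level (ks!j) d)"
proof -
  let ?f = "\<lambda>i. map (Cons i) (level (ks!i) d)"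
  have "level (Node ks) (Suc d) = concat (map ?f (rev [Suc j..<length ks])) @ ?f j @ concat (map ?f (rev [0..<j]))"
    unfolding level_Node upt_split3[OF assms(1)] by simp
  also have "concat (map ?f (rev [Suc j..<length ks])) = []"
    by (rule concat_map_empty) (use assms(3) in auto)
  finally show ?thesis using assms(2) by (cases "level (ks!j) d") auto
qed

lemma last_level:
  assumes "j < length ks" "level (ks!j) d \<noteq> []" "\<forall>i<j. level (ks!i) d = []"
  shows "last (level (Node ks) (Suc d)) = j # last (level (ks!j) d)"
proof -
  let ?f = "\<lambda>i. map (Cons i) (level (ks!i) d)"
  have "level (Node ks) (Suc d) = concat (map ?f (rev [Suc j..<length ks])) @ ?f j @ concat (map ?f (rev [0..<j]))"
    unfolding level_Node upt_split3[OF assms(1)] by simp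
  also have "concat (map ?f (rev [0..<j])) = []"
    by (rule concat_map_empty) (use assms(3) in auto)
  finally show ?thesis using assms(2) by (simp add: last_map)
qed

lemma adj_cong: "(\<forall>x\<in>set xs. \<forall>y\<in>set xs. P x y = Q x y) \<Longrightarrow> adj P xs = adj Q xs"
  by (induction P xs rule: adj.induct) auto

definition LA :: "nat \<Rightarrow> otree \<Rightarrow> bool" where
  "LA b T = (\<forall>d. \<forall>p\<in>set (level T d). \<forall>q\<in>set (level T d). d \<le> lcp_len p q + b)"

definition LB :: "nat \<Rightarrow> otree \<Rightarrow> bool" where
  "LB a T = (\<forall>d. Suc d \<le> depth T \<longrightarrow> d \<le> lcp_len (last (level T d)) (hd (level T (Suc d))) + a)"

lemma level_adj: "adj (\<lambda>p q. path_dist p q \<le> g + 1) (level T d) \<longleftrightarrow>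
   (\<forall>p\<in>set (level T d). \<forall>q\<in>set (level T d). d \<le> lcp_len p q + (g + 1) div 2)"
proof -
  let ?R = "\<lambda>p q. d \<le> lcp_len p q + (g + 1) div 2"
  let ?S = "set (level T d)"
  have "adj (\<lambda>p q. path_dist p q \<le> g + 1) (level T d) = adj ?R (level T d)"
  proof (rule adj_cong, intro ballI)
    fix x y assume x: "x \<in> ?S" and y: "y \<in> ?S"
    show "(path_dist x y \<le> g + 1) = ?R x y"
      by (rule path_dist_same[OF level_length[OF x] level_length[OF y]])
  qed
  also have "\<dots> \<longleftrightarrow> (\<forall>p\<in>?S. \<forall>q\<in>?S. ?R p q)"
  proof
    assume "adj ?R (level T d)"
    moreover have "?R x z" if "x \<in> ?S" "y \<in> ?S" "z \<in> ?S" "?R x y" "?R y z" for x y z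
      using lcp_trans[of x y z] that(4,5) by linarith
    moreover have "?R x x" if "x \<in> ?S" for x
      using level_length[OF that] by (simp add: lcp_self)
    moreover have "?R y x" if "x \<in> ?S" "y \<in> ?S" "?R x y" for x y
      using that(3) by (simp add: lcp_sym)
    ultimately show "\<forall>p\<in>?S. \<forall>q\<in>?S. ?R p q"
      using adj_all[of ?S ?R "level T d"] by blast
  next
    assume "\<forall>p\<in>?S. \<forall>q\<in>?S. ?R p q"
    then show "adj ?R (level T d)" by (rule all_adj)
  qed
  finally show ?thesis .
qed

lemma bfs_iff: "adj (\<lambda>p q. path_dist p q \<le> g + 1) (bfs T) \<longleftrightarrow> LA ((g + 1) div 2) T \<and> LB (g div 2) T"
proof -
  let ?P = "\<lambda>p q. path_dist p q \<le> g + 1"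
  let ?D = "depth T"
  have ne: "\<forall>xs\<in>set (map (level T) [0..<Suc ?D]). xs \<noteq> []"
    by (auto simp: level_empty)
  have "adj ?P (bfs T) \<longleftrightarrow> (\<forall>xs\<in>set (map (level T) [0..<Suc ?D]). adj ?P xs) \<and>
      adj (\<lambda>xs ys. ?P (last xs) (hd ys)) (map (level T) [0..<Suc ?D])"
    unfolding bfs_def by (rule adj_concat[OF ne])
  also have "(\<forall>xs\<in>set (map (level T) [0..<Suc ?D]). adj ?P xs) \<longleftrightarrow> LA ((g + 1) div 2) T"
  proof -
    have "(\<forall>xs\<in>set (map (level T) [0..<Suc ?D]). adj ?P xs) \<longleftrightarrow> (\<forall>d. adj ?P (level T d))"
    proof (intro iffI allI)
      fix d assume H: "\<forall>xs\<in>set (map (level T) [0..<Suc ?D]). adj ?P xs"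
      show "adj ?P (level T d)"
      proof (cases "d \<le> ?D")
        case True
        then show ?thesis using H by auto
      next
        case False
        then have "level T d = []" by (simp add: level_empty)
        then show ?thesis by simp
      qed
    qed auto
    also have "\<dots> \<longleftrightarrow> LA ((g + 1) div 2) T"
      unfolding LA_def level_adj ..
    finally show ?thesis .
  qed
  also have "adj (\<lambda>xs ys. ?P (last xs) (hd ys)) (map (level T) [0..<Suc ?D]) \<longleftrightarrow> LB (g div 2) T"
  proof -
    have "adj (\<lambda>xs ys. ?P (last xs) (hd ys)) (map (level T) [0..<Suc ?D]) \<longleftrightarrow>
      (\<forall>d<?D. ?P (last (level T d)) (hd (level T (Suc d))))"
      by (rule adj_map_upt)
    also have "\<dots> \<longleftrightarrow> LB (g div 2) T"
      unfolding LB_def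
    proof (intro iffI allI impI)
      fix d assume H: "\<forall>d<?D. ?P (last (level T d)) (hd (level T (Suc d)))" and d: "Suc d \<le> ?D"
      have n1: "level T d \<noteq> []" "level T (Suc d) \<noteq> []" using d by (auto simp: level_empty)
      have "length (last (level T d)) = d" using n1 by (intro level_length[of _ T]) simp
      moreover have "length (hd (level T (Suc d))) = Suc d" using n1 by (intro level_length[of _ T]) simp
      ultimately show "d \<le> lcp_len (last (level T d)) (hd (level T (Suc d))) + g div 2"
        using H[rule_format, of d] d path_dist_next[of "last (level T d)" d "hd (level T (Suc d))" g] by simp
    next
      fix d assume H: "\<forall>d. Suc d \<le> ?D \<longrightarrow> d \<le> lcp_len (last (level T d)) (hd (level T (Suc d))) + g div 2"
        and d: "d < ?D"
      have n1: "level T d \<noteq> []" "level T (Suc d) \<noteq> []" using d by (auto simp: level_empty)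
      have "length (last (level T d)) = d" using n1 by (intro level_length[of _ T]) simp
      moreover have "length (hd (level T (Suc d))) = Suc d" using n1 by (intro level_length[of _ T]) simp
      ultimately show "?P (last (level T d)) (hd (level T (Suc d)))"
        using H[rule_format, of d] d path_dist_next[of "last (level T d)" d "hd (level T (Suc d))" g] by simp
    qed
    finally show ?thesis .
  qed
  finally show ?thesis .
qed




inductive good :: "nat \<Rightarrow> nat \<Rightarrow> otree \<Rightarrow> bool" for a b where
  base: "depth t \<le> b \<Longrightarrow> good a b t"
| step: "good a b c \<Longrightarrow> b \<le> depth c \<Longrightarrow> \<forall>t\<in>set ls. Suc (depth t) \<le> a \<Longrightarrow>
         \<forall>t\<in>set rs. depth t < b \<Longrightarrow> good a b (Node (ls @ c # rs))"

lemma level_ne_depth: "p \<in> set (level t d) \<Longrightarrow> d \<le> depth t"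
  using level_empty[of t d] by (cases "level t d") auto

lemma level_ne_iff: "level t d \<noteq> [] \<longleftrightarrow> d \<le> depth t"
  using level_empty[of t d] by linarith

lemma level_0: "level t 0 = [[]]" by simp

lemma good_imp:
  assumes "good a b T" "a \<le> b" "b \<le> Suc a"
  shows "LA b T \<and> LB a T"
  using assms(1)
proof (induction T rule: good.induct)
  case (base t)
  have "LA b t" unfolding LA_def
    using base level_ne_depth by (meson le_add2 le_trans)
  moreover have "LB a t" unfolding LB_def using base assms(3) by auto
  ultimately show ?case by blast
next
  case (step c ls rs)
  define ks where "ks = ls @ c # rs"
  define j where "j = length ls"
  have jl: "j < length ks" and kj: "ks ! j = c" unfolding ks_def j_def by (auto simp: nth_append)
  have other: "depth (ks!i) < b" if "i < length ks" "i \<noteq> j" for i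
  proof (cases "i < j")
    case True
    then have "ks!i \<in> set ls" unfolding ks_def j_def by (simp add: nth_append)
    then show ?thesis using step.hyps(3) assms(2) by auto
  next
    case False
    then have "i > j" using that by simp
    then have "ks!i \<in> set rs" using that unfolding ks_def j_def
      by (auto simp: nth_append nth_Cons' intro!: nth_mem)
    then show ?thesis using step.hyps(4) by auto
  qed
  have left: "Suc (depth (ks!i)) \<le> a" if "i < j" for i
  proof -
    have "ks!i \<in> set ls" using that unfolding ks_def j_def by (simp add: nth_append)
    then show ?thesis using step.hyps(3) by auto
  qed
  have dT: "depth (Node ks) = Suc (depth c)"
  proof (rule antisym)
    show "depth (Node ks) \<le> Suc (depth c)"
      unfolding depth_Node_le
    proof
      fix t assume "t \<in> set ks"
      then obtain i where "i < length ks" "t = ks!i" by (auto simp: in_set_conv_nth)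
      then show "Suc (depth t) \<le> Suc (depth c)" using other[of i] kj step.hyps(2) by (cases "i = j") auto
    qed
    show "Suc (depth c) \<le> depth (Node ks)" by (rule depth_child) (simp add: ks_def)
  qed
  have IHA: "LA b c" and IHB: "LB a c" using step.IH by auto
  have "LA b (Node ks)" unfolding LA_def
  proof (intro allI ballI)
    fix d p q assume p: "p \<in> set (level (Node ks) d)" and q: "q \<in> set (level (Node ks) d)"
    show "d \<le> lcp_len p q + b"
    proof (cases d)
      case 0
      then show ?thesis using p q by simp
    next
      case (Suc d')
      show ?thesis
      proof (cases "d \<le> b")
        case True then show ?thesis by simp
      next
        case False
        obtain i p' where ip: "p = i # p'" "i < length ks" "p' \<in> set (level (ks!i) d')"
          using p Suc set_level_Node by blast
        obtain i' q' where iq: "q = i' # q'" "i' < length ks" "q' \<in> set (level (ks!i') d')"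
          using q Suc set_level_Node by blast
        have "d' \<le> depth (ks!i)" "d' \<le> depth (ks!i')" using ip iq level_ne_depth by auto
        moreover have "k = j" if "k < length ks" "d' \<le> depth (ks!k)" for k
          using other[OF that(1)] that(2) False Suc by (cases "k = j") auto
        ultimately have "i = j" "i' = j" using ip iq by auto
        then have "d' \<le> lcp_len p' q' + b" using IHA ip iq kj unfolding LA_def by blast
        then show ?thesis using ip iq \<open>i = j\<close> \<open>i' = j\<close> Suc by simp
      qed
    qed
  qed
  moreover have "LB a (Node ks)" unfolding LB_def
  proof (intro allI impI)
    fix d assume d: "Suc d \<le> depth (Node ks)"
    show "d \<le> lcp_len (last (level (Node ks) d)) (hd (level (Node ks) (Suc d))) + a"
    proof (cases "d \<le> a")
      case True then show ?thesis by simp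
    next
      case False
      then obtain d' where d': "d = Suc d'" by (cases d) auto
      have dc: "Suc d' \<le> depth c" using d d' dT by simp
      have L: "last (level (Node ks) (Suc d')) = j # last (level c d')"
        using last_level[of j ks d'] jl kj dc left level_ne_iff[of c d'] level_empty
        by (metis Suc_le_lessD Suc_leD less_le_trans not_less_eq_eq False d' )
      have H: "hd (level (Node ks) (Suc (Suc d'))) = j # hd (level c (Suc d'))"
      proof (rule hd_level[of j ks "Suc d'", unfolded kj])
        show "j < length ks" by (rule jl)
        show "level c (Suc d') \<noteq> []" using dc level_ne_iff by blast
        show "\<forall>i. j < i \<and> i < length ks \<longrightarrow> level (ks ! i) (Suc d') = []"
        proof (intro allI impI)
          fix i assume "j < i \<and> i < length ks"
          then have "depth (ks!i) < b" using other by auto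
          then show "level (ks ! i) (Suc d') = []" using False d' assms(3) level_empty by simp
        qed
      qed
      have "d' \<le> lcp_len (last (level c d')) (hd (level c (Suc d'))) + a"
        using IHB dc unfolding LB_def by blast
      then show ?thesis using L H d' by simp
    qed
  qed
  ultimately show ?case unfolding ks_def by blast
qed


lemma imp_good:
  assumes "LA b T" "LB a T" "a \<le> b" "b \<le> Suc a"
  shows "good a b T"
  using assms(1,2)
proof (induction T)
  case (Node ks)
  let ?T = "Node ks"
  show ?case
  proof (cases "depth ?T \<le> b")
    case True
    then show ?thesis by (rule good.base)
  next
    case False
    then have "ks \<noteq> []" by auto
    then obtain c where cin: "c \<in> set ks" and dT: "depth ?T = Suc (depth c)"
      using depth_Node_ex by blast
    have bc: "b \<le> depth c" using False dT by linarith
    obtain j where jl: "j < length ks" and kj: "ks ! j = c" using cin by (auto simp: in_set_conv_nth)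
    have other: "depth (ks!i) < b" if "i < length ks" "i \<noteq> j" for i
    proof (rule ccontr)
      assume "\<not> depth (ks!i) < b"
      then have n1: "level (ks!i) b \<noteq> []" using level_ne_iff by simp
      have n2: "level c b \<noteq> []" using bc level_ne_iff by simp
      have "i # hd (level (ks!i) b) \<in> set (level ?T (Suc b))"
        using n1 that(1) set_level_Node by auto
      moreover have "j # hd (level c b) \<in> set (level ?T (Suc b))"
        using n2 jl kj set_level_Node by auto
      ultimately have "Suc b \<le> lcp_len (i # hd (level (ks!i) b)) (j # hd (level c b)) + b"
        using Node.prems(1) unfolding LA_def by blast
      then show False using that(2) by simp
    qed
    have left: "Suc (depth (ks!i)) \<le> a" if "i < j" for i
    proof (rule ccontr)
      assume A: "\<not> Suc (depth (ks!i)) \<le> a"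
      have ab: "b = Suc a"
      proof -
        have "depth (ks!i) < b" using other[of i] that jl by simp
        then show ?thesis using A assms(3,4) by linarith
      qed
      define i0 where "i0 = (LEAST k. a \<le> depth (ks!k))"
      have "a \<le> depth (ks!i)" using A by simp
      then have i0a: "a \<le> depth (ks!i0)" and i0i: "i0 \<le> i"
        unfolding i0_def by (auto intro: LeastI Least_le)
      have i0min: "\<not> a \<le> depth (ks!k)" if "k < i0" for k
        using that unfolding i0_def by (rule not_less_Least)
      have i0l: "i0 < length ks" using i0i that jl by simp
      have L: "last (level ?T (Suc a)) = i0 # last (level (ks!i0) a)"
      proof (rule last_level)
        show "i0 < length ks" by (rule i0l)
        show "level (ks ! i0) a \<noteq> []" using i0a level_ne_iff by simp
        show "\<forall>k<i0. level (ks ! k) a = []" using i0min level_empty by (simp add: not_le)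
      qed
      have H: "hd (level ?T (Suc (Suc a))) = j # hd (level c (Suc a))"
      proof (rule hd_level[of j ks "Suc a", unfolded kj])
        show "j < length ks" by (rule jl)
        show "level c (Suc a) \<noteq> []" using bc ab level_ne_iff by simp
        show "\<forall>k. j < k \<and> k < length ks \<longrightarrow> level (ks ! k) (Suc a) = []"
          using other ab level_empty by auto
      qed
      have "Suc (Suc a) \<le> depth ?T" using dT bc ab by simp
      then have "Suc a \<le> lcp_len (last (level ?T (Suc a))) (hd (level ?T (Suc (Suc a)))) + a"
        using Node.prems(2) unfolding LB_def by blast
      then show False using L H i0i that by simp
    qed
    have "LA b c" unfolding LA_def
    proof (intro allI ballI)
      fix d p q assume p: "p \<in> set (level c d)" and q: "q \<in> set (level c d)"
      have "j # p \<in> set (level ?T (Suc d))" "j # q \<in> set (level ?T (Suc d))"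
        using p q jl kj set_level_Node by auto
      then have "Suc d \<le> lcp_len (j # p) (j # q) + b" using Node.prems(1) unfolding LA_def by blast
      then show "d \<le> lcp_len p q + b" by simp
    qed
    moreover have "LB a c" unfolding LB_def
    proof (intro allI impI)
      fix d assume d: "Suc d \<le> depth c"
      show "d \<le> lcp_len (last (level c d)) (hd (level c (Suc d))) + a"
      proof (cases "d \<le> a")
        case True then show ?thesis by simp
      next
        case False
        then have bd: "b \<le> d" using assms(4) by simp
        have L: "last (level ?T (Suc d)) = j # last (level c d)"
        proof (rule last_level[of j ks d, unfolded kj])
          show "j < length ks" by (rule jl)
          show "level c d \<noteq> []" using d level_ne_iff by simp
          show "\<forall>i<j. level (ks ! i) d = []"
            using other jl bd level_empty by (metis less_imp_le_nat less_le_trans nat_neq_iff order_less_trans)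
        qed
        have H: "hd (level ?T (Suc (Suc d))) = j # hd (level c (Suc d))"
        proof (rule hd_level[of j ks "Suc d", unfolded kj])
          show "j < length ks" by (rule jl)
          show "level c (Suc d) \<noteq> []" using d level_ne_iff by simp
          show "\<forall>k. j < k \<and> k < length ks \<longrightarrow> level (ks ! k) (Suc d) = []"
          proof (intro allI impI)
            fix k assume "j < k \<and> k < length ks"
            then have "depth (ks!k) < b" using other by auto
            then show "level (ks ! k) (Suc d) = []" using bd level_empty by simp
          qed
        qed
        have "Suc (Suc d) \<le> depth ?T" using dT d by simp
        then have "Suc d \<le> lcp_len (last (level ?T (Suc d))) (hd (level ?T (Suc (Suc d)))) + a"
          using Node.prems(2) unfolding LB_def by blast
        then show ?thesis using L H by simp
      qed
    qed
    ultimately have gc: "good a b c" using Node.IH cin by blast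
    have eq: "ks = take j ks @ c # drop (Suc j) ks" using jl kj by (metis id_take_nth_drop)
    have "good a b (Node (take j ks @ c # drop (Suc j) ks))"
    proof (rule good.step[OF gc bc])
      show "\<forall>t\<in>set (take j ks). Suc (depth t) \<le> a"
      proof
        fix t assume "t \<in> set (take j ks)"
        then obtain i where "i < length (take j ks)" "t = take j ks ! i" by (auto simp: in_set_conv_nth)
        then show "Suc (depth t) \<le> a" using left by simp
      qed
      show "\<forall>t\<in>set (drop (Suc j) ks). depth t < b"
      proof
        fix t assume "t \<in> set (drop (Suc j) ks)"
        then obtain i where "i < length (drop (Suc j) ks)" "t = drop (Suc j) ks ! i" by (auto simp: in_set_conv_nth)
        then show "depth t < b" using other[of "Suc j + i"] by simp
      qed
    qed
    then show ?thesis using eq by simp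
  qed
qed




fun build :: "otree list \<Rightarrow> otree list \<Rightarrow> otree \<Rightarrow> otree" where
  "build (L # Ls) (R # Rs) M = Node (kids L @ build Ls Rs M # kids R)"
| "build _ _ M = M"

lemma depth_kids: "depth L \<le> k \<longleftrightarrow> (\<forall>t\<in>set (kids L). Suc (depth t) \<le> k)"
  by (cases L) (simp only: kids.simps depth_Node_le)

lemma Node_kids: "Node (kids L) = L" by (cases L) simp

lemma depth_build:
  assumes "length Ls = length Rs" "\<forall>t\<in>set Ls. depth t \<le> a" "\<forall>t\<in>set Rs. depth t \<le> b"
    "a \<le> b" "b \<le> depth M"
  shows "depth (build Ls Rs M) = depth M + length Ls"
  using assms(1-3)
proof (induction Ls arbitrary: Rs)
  case Nil
  then show ?case by simp
next
  case (Cons L Ls)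
  then obtain R Rs' where Rs: "Rs = R # Rs'" by (cases Rs) auto
  let ?c = "build Ls Rs' M"
  have IH: "depth ?c = depth M + length Ls" using Cons Rs by simp
  have "depth (Node (kids L @ ?c # kids R)) = Suc (depth ?c)"
  proof (rule antisym)
    show "depth (Node (kids L @ ?c # kids R)) \<le> Suc (depth ?c)"
      unfolding depth_Node_le
    proof
      fix t assume t: "t \<in> set (kids L @ ?c # kids R)"
      have "depth L \<le> a" "depth R \<le> b" using Cons.prems Rs by auto
      then have "\<forall>t\<in>set (kids L). Suc (depth t) \<le> a" "\<forall>t\<in>set (kids R). Suc (depth t) \<le> b"
        using depth_kids by blast+
      then show "Suc (depth t) \<le> Suc (depth ?c)" using t IH assms(4,5) by auto
    qed
    show "Suc (depth ?c) \<le> depth (Node (kids L @ ?c # kids R))" by (rule depth_child) simp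
  qed
  then show ?case using IH Rs by simp
qed

lemma good_build:
  assumes "length Ls = length Rs" "\<forall>t\<in>set Ls. depth t \<le> a" "\<forall>t\<in>set Rs. depth t \<le> b"
    "a \<le> b" "depth M = b"
  shows "good a b (build Ls Rs M)"
  using assms(1-3)
proof (induction Ls arbitrary: Rs)
  case Nil
  then show ?case using assms(5) by (auto intro: good.base)
next
  case (Cons L Ls)
  then obtain R Rs' where Rs: "Rs = R # Rs'" by (cases Rs) auto
  let ?c = "build Ls Rs' M"
  have gc: "good a b ?c" using Cons Rs by simp
  have dc: "b \<le> depth ?c" using depth_build[of Ls Rs' a b M] Cons.prems Rs assms(4,5) by simp
  have "depth L \<le> a" "depth R \<le> b" using Cons.prems Rs by auto
  then have "\<forall>t\<in>set (kids L). Suc (depth t) \<le> a" "\<forall>t\<in>set (kids R). depth t < b"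
    using depth_kids[of L a] depth_kids[of R b] by auto
  then show ?case using good.step[OF gc dc] Rs by simp
qed

lemma nverts_kids: "nverts L = Suc (sum_list (map nverts (kids L)))"
  by (cases L) simp

lemma nverts_build:
  assumes "length Ls = length Rs"
  shows "nverts (build Ls Rs M) + length Ls = sum_list (map nverts Ls) + sum_list (map nverts Rs) + nverts M"
  using assms
proof (induction Ls arbitrary: Rs)
  case Nil
  then show ?case by simp
next
  case (Cons L Ls)
  then obtain R Rs' where Rs: "Rs = R # Rs'" by (cases Rs) auto
  have IH: "nverts (build Ls Rs' M) + length Ls = sum_list (map nverts Ls) + sum_list (map nverts Rs') + nverts M"
    using Cons Rs by simp
  show ?case using IH Rs nverts_kids[of L] nverts_kids[of R] by simp
qed

lemma split_unique:
  assumes "xs @ c # ys = xs' @ c' # ys'" "\<forall>t\<in>set xs. \<not> P t" "\<forall>t\<in>set xs'. \<not> P t" "P c" "P c'"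
  shows "xs = xs' \<and> c = c' \<and> ys = ys'"
  using assms
proof (induction xs arbitrary: xs')
  case Nil
  then show ?case by (cases xs') auto
next
  case (Cons x xs)
  then show ?case by (cases xs') auto
qed

definition Bq :: "nat \<Rightarrow> nat \<Rightarrow> otree list \<Rightarrow> otree list \<Rightarrow> otree \<Rightarrow> bool" where
  "Bq a b Ls Rs M = (length Ls = length Rs \<and> (\<forall>t\<in>set Ls. depth t \<le> a) \<and> (\<forall>t\<in>set Rs. depth t \<le> b)
     \<and> (if Ls = [] then depth M \<le> b else depth M = b))"

lemma build_inj:
  assumes "a \<le> b" "Bq a b Ls Rs M" "Bq a b Ls' Rs' M'" "build Ls Rs M = build Ls' Rs' M'"
  shows "Ls = Ls' \<and> Rs = Rs' \<and> M = M'"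
  using assms(2-4)
proof (induction Ls arbitrary: Rs M Ls' Rs' M')
  case Nil
  then have Rs: "Rs = []" by (simp add: Bq_def)
  show ?case
  proof (cases Ls')
    case Nil
    then show ?thesis using Rs Nil.prems by (simp add: Bq_def)
  next
    case (Cons L' Ls'')
    have "depth (build Ls' Rs' M') = depth M' + length Ls'"
      using Nil.prems(2) Cons assms(1) by (intro depth_build[of _ _ a b]) (auto simp: Bq_def)
    moreover have "depth M' = b" using Nil.prems(2) Cons by (simp add: Bq_def)
    moreover have "depth (build [] Rs M) \<le> b" using Nil.prems(1) Rs by (simp add: Bq_def)
    ultimately show ?thesis using Nil.prems(3) Cons by simp
  qed
next
  case (Cons L Ls)
  obtain R Rs0 where Rs: "Rs = R # Rs0" using Cons.prems(1) by (cases Rs) (auto simp: Bq_def)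
  have dM: "depth M = b" using Cons.prems(1) by (simp add: Bq_def)
  show ?case
  proof (cases Ls')
    case Nil
    have "depth (build (L # Ls) Rs M) = depth M + length (L # Ls)"
      using Cons.prems(1) assms(1) dM by (intro depth_build[of _ _ a b]) (auto simp: Bq_def)
    moreover have "depth (build [] Rs' M') \<le> b" using Cons.prems(2) Nil by (cases Rs') (auto simp: Bq_def)
    ultimately show ?thesis using Cons.prems(3) Nil dM by simp
  next
    case (Cons L' Ls'')
    obtain R' Rs1 where Rs': "Rs' = R' # Rs1" using Cons.prems(2) Cons by (cases Rs') (auto simp: Bq_def)
    have dM': "depth M' = b" using Cons.prems(2) Cons by (simp add: Bq_def)
    have B0: "Bq a b Ls Rs0 M" using Cons.prems(1) Rs dM by (auto simp: Bq_def)
    have B1: "Bq a b Ls'' Rs1 M'" using Cons.prems(2) Cons Rs' dM' by (auto simp: Bq_def)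
    let ?c = "build Ls Rs0 M" and ?c' = "build Ls'' Rs1 M'"
    have eq: "kids L @ ?c # kids R = kids L' @ ?c' # kids R'"
      using Cons.prems(3) Rs Rs' Cons by simp
    have "depth ?c = depth M + length Ls" using B0 assms(1) dM by (intro depth_build[of _ _ a b]) (auto simp: Bq_def)
    then have dc: "b \<le> depth ?c" using dM by simp
    have "depth ?c' = depth M' + length Ls''" using B1 assms(1) dM' by (intro depth_build[of _ _ a b]) (auto simp: Bq_def)
    then have dc': "b \<le> depth ?c'" using dM' by simp
    have "depth L \<le> a" "depth L' \<le> a" using Cons.prems(1,2) Cons by (auto simp: Bq_def)
    then have kL: "\<forall>t\<in>set (kids L). \<not> b \<le> depth t" "\<forall>t\<in>set (kids L'). \<not> b \<le> depth t"
      using depth_kids[of L a] depth_kids[of L' a] assms(1) by auto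
    have s: "kids L = kids L' \<and> ?c = ?c' \<and> kids R = kids R'"
      by (rule split_unique[OF eq kL dc dc'])
    then have "L = L'" "R = R'" using Node_kids by metis+
    moreover have "Ls = Ls'' \<and> Rs0 = Rs1 \<and> M = M'" using Cons.IH[OF B0 B1] s by simp
    ultimately show ?thesis using Rs Rs' Cons by simp
  qed
qed

lemma build_surj:
  assumes "good a b T"
  shows "\<exists>Ls Rs M. Bq a b Ls Rs M \<and> build Ls Rs M = T"
  using assms
proof (induction T rule: good.induct)
  case (base t)
  then show ?case by (intro exI[of _ "[]"] exI[of _ t]) (simp add: Bq_def)
next
  case (step c ls rs)
  then obtain Ls Rs M where B: "Bq a b Ls Rs M" and bc: "build Ls Rs M = c" by blast
  have "depth M = b"
  proof (cases Ls)
    case Nil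
    then have "Rs = []" using B by (simp add: Bq_def)
    then show ?thesis using B bc step.hyps(2) Nil by (simp add: Bq_def)
  next
    case (Cons x xs)
    then show ?thesis using B by (simp add: Bq_def)
  qed
  moreover have "depth (Node ls) \<le> a" using step.hyps(3) by simp
  moreover have "depth (Node rs) \<le> b" using step.hyps(4) by (simp add: Suc_leI)
  ultimately have "Bq a b (Node ls # Ls) (Node rs # Rs) M" using B by (simp add: Bq_def)
  moreover have "build (Node ls # Ls) (Node rs # Rs) M = Node (ls @ c # rs)" using bc by simp
  ultimately show ?case by blast
qed




lemma tdist_iff:
  assumes "nverts T = n + 1"
  shows "(\<forall>i<n. tdist T i (i + 1) \<le> g + 1) \<longleftrightarrow> adj (\<lambda>p q. path_dist p q \<le> g + 1) (bfs T)"
proof -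
  have len: "length (bfs T) = n + 1" using assms length_bfs by simp
  have vt: "tdist T i j = path_dist (bfs T ! (n - i)) (bfs T ! (n - j))" for i j
    using assms by (simp add: vertex_def tdist_def)
  have 1: "tdist T (n - Suc k) (n - Suc k + 1) = path_dist (bfs T ! k) (bfs T ! Suc k)" if "k < n" for k
  proof -
    have "n - (n - Suc k) = Suc k" "n - (n - Suc k + 1) = k" using that by auto
    then show ?thesis unfolding vt using path_dist_sym by metis
  qed
  show ?thesis
    unfolding adj_nth len
  proof (intro iffI allI impI)
    fix k assume H: "\<forall>i<n. tdist T i (i + 1) \<le> g + 1" and k: "Suc k < n + 1"
    have "n - Suc k < n" using k by linarith
    then have "tdist T (n - Suc k) (n - Suc k + 1) \<le> g + 1" using H by blast
    then show "path_dist (bfs T ! k) (bfs T ! Suc k) \<le> g + 1" using 1[of k] k by linarith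
  next
    fix i assume H: "\<forall>k. Suc k < n + 1 \<longrightarrow> path_dist (bfs T ! k) (bfs T ! Suc k) \<le> g + 1" and i: "i < n"
    define k where "k = n - Suc i"
    have k: "k < n" "i = n - Suc k" using i unfolding k_def by auto
    have "path_dist (bfs T ! k) (bfs T ! Suc k) \<le> g + 1" using H k(1) by simp
    then show "tdist T i (i + 1) \<le> g + 1" using 1[OF k(1)] k(2) by simp
  qed
qed

theorem lemma3p10:
  fixes g n :: nat
  shows "\<exists>f. bij_betw f
     {T. nverts T = n + 1 \<and> (\<forall>i<n. tdist T i (i + 1) \<le> g + 1)}
     {(m, L, R, M). length L = m \<and> length R = m
        \<and> (\<forall>t\<in>set L. depth t \<le> g div 2)
        \<and> (\<forall>t\<in>set R. depth t \<le> (g + 1) div 2)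
        \<and> (if m = 0 then depth M \<le> (g + 1) div 2 else depth M = (g + 1) div 2)
        \<and> sum_list (map nverts L) + sum_list (map nverts R) + nverts M = n + 1 + m}"
proof -
  define a where "a = g div 2"
  define b where "b = (g + 1) div 2"
  have ab: "a \<le> b" "b \<le> Suc a" unfolding a_def b_def by auto
  let ?A = "{T. nverts T = n + 1 \<and> (\<forall>i<n. tdist T i (i + 1) \<le> g + 1)}"
  let ?B = "{(m, L, R, M). length L = m \<and> length R = m
        \<and> (\<forall>t\<in>set L. depth t \<le> g div 2)
        \<and> (\<forall>t\<in>set R. depth t \<le> (g + 1) div 2)
        \<and> (if m = 0 then depth M \<le> (g + 1) div 2 else depth M = (g + 1) div 2)
        \<and> sum_list (map nverts L) + sum_list (map nverts R) + nverts M = n + 1 + m}"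
  have A: "?A = {T. nverts T = n + 1 \<and> good a b T}"
  proof (intro Collect_cong conj_cong refl)
    fix T assume "nverts T = n + 1"
    then have "(\<forall>i<n. tdist T i (i + 1) \<le> g + 1) \<longleftrightarrow> LA b T \<and> LB a T"
      using tdist_iff[of T n g] bfs_iff[of g T] unfolding a_def b_def by simp
    also have "\<dots> \<longleftrightarrow> good a b T" using good_imp[OF _ ab] imp_good[OF _ _ ab] by blast
    finally show "(\<forall>i<n. tdist T i (i + 1) \<le> g + 1) \<longleftrightarrow> good a b T" .
  qed
  have Bm: "x \<in> ?B \<longleftrightarrow> (case x of (m, L, R, M) \<Rightarrow> m = length L \<and> Bq a b L R M
        \<and> sum_list (map nverts L) + sum_list (map nverts R) + nverts M = n + 1 + m)" for x
    by (cases x) (auto simp: Bq_def a_def b_def)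
  define h where "h = (\<lambda>(m::nat, L, R, M). build L R M)"
  have "bij_betw h ?B ?A"
    unfolding bij_betw_def
  proof
    show "inj_on h ?B"
    proof (rule inj_onI)
      fix x y assume x: "x \<in> ?B" and y: "y \<in> ?B" and e: "h x = h y"
      obtain m L R M where xe: "x = (m, L, R, M)" by (cases x) auto
      obtain m' L' R' M' where ye: "y = (m', L', R', M')" by (cases y) auto
      have "Bq a b L R M" "m = length L" using x Bm[of x] xe by auto
      moreover have "Bq a b L' R' M'" "m' = length L'" using y Bm[of y] ye by auto
      moreover have "build L R M = build L' R' M'" using e xe ye h_def by simp
      ultimately show "x = y" using build_inj[OF ab(1), of L R M L' R' M'] xe ye by simp
    qed
    show "h ` ?B = ?A"
    proof
      show "h ` ?B \<subseteq> ?A"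
      proof
        fix T assume "T \<in> h ` ?B"
        then obtain x where x: "x \<in> ?B" and T: "T = h x" by blast
        obtain m L R M where xe: "x = (m, L, R, M)" by (cases x) auto
        have B: "Bq a b L R M" and m: "m = length L"
          and s: "sum_list (map nverts L) + sum_list (map nverts R) + nverts M = n + 1 + m"
          using x Bm[of x] xe by auto
        have T': "T = build L R M" using T xe h_def by simp
        have lLR: "length L = length R" using B by (simp add: Bq_def)
        have "nverts T = n + 1" unfolding T' using nverts_build[OF lLR, of M] s m by linarith
        moreover have "good a b T"
        proof (cases "L = []")
          case True
          then have "R = []" using lLR by simp
          moreover have "depth M \<le> b" using B True unfolding Bq_def by simp
          ultimately show ?thesis using True T' by (simp add: good.base)
        next
          case False
          then have "depth M = b" "\<forall>t\<in>set L. depth t \<le> a" "\<forall>t\<in>set R. depth t \<le> b"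
            using B unfolding Bq_def by auto
          then show ?thesis using T' ab good_build[OF lLR, of a b M] by simp
        qed
        ultimately show "T \<in> ?A" unfolding A by blast
      qed
      show "?A \<subseteq> h ` ?B"
      proof
        fix T assume "T \<in> ?A"
        then have nT: "nverts T = n + 1" and gT: "good a b T" unfolding A by auto
        obtain L R M where B: "Bq a b L R M" and bT: "build L R M = T" using build_surj[OF gT] by blast
        have "nverts (build L R M) + length L = sum_list (map nverts L) + sum_list (map nverts R) + nverts M"
          using B by (intro nverts_build) (simp add: Bq_def)
        then have mem: "(length L, L, R, M) \<in> ?B" using B bT nT by (subst Bm) simp
        have "h (length L, L, R, M) \<in> h ` ?B" using mem by (rule imageI)
        moreover have "h (length L, L, R, M) = T" using bT h_def by simp
        ultimately show "T \<in> h ` ?B" by simp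
      qed
    qed
  qed
  then have "bij_betw (inv_into ?B h) ?A ?B" by (rule bij_betw_inv_into)
  then show ?thesis by blast
qed


end
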